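(* Let $1\le p<\infty$, $X=\ell_p(\mathbb Z_+)$, and let $\mathbf u,\mathbf v$ be bounded sequences of non-zero scalars with $\inf_{n\ge1}|u_n|>0$ and $\inf_{n\ge1}|v_n|>0$. If the weighted backward shifts $B_{\mathbf u}$ and $B_{\mathbf v}$ are not similar, then they are orthogonal.
   Context: $(e_n)_{n\ge0}$ is the canonical basis of $\ell_p(\mathbb Z_+)$ (real or complex); $B_{\mathbf w}e_0=0$, $B_{\mathbf w}e_n=w_ne_{n-1}$. Operators $T_1,T_2$ are similar if $T_1=JT_2J^{-1}$ for some invertible bounded operator $J$ on $X$. They are orthogonal if any $T_1$-invariant and $T_2$-invariant Borel probability measures $m_1,m_2$ with $m_1(\{0\})=0=m_2(\{0\})$ are mutually singular. *)

theory Defs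
  imports "HOL-Probability.Probability"
begin

definition lp :: "real \<Rightarrow> (nat \<Rightarrow> 'a::real_normed_field) set" where
  "lp p = {x. summable (\<lambda>n. norm (x n) powr p)}"

definition lp_norm :: "real \<Rightarrow> (nat \<Rightarrow> 'a::real_normed_field) \<Rightarrow> real" where
  "lp_norm p x = (\<Sum>n. norm (x n) powr p) powr (1 / p)"

definition lp_open :: "real \<Rightarrow> (nat \<Rightarrow> 'a::real_normed_field) set \<Rightarrow> bool" where
  "lp_open p U \<longleftrightarrow> U \<subseteq> lp p \<and>
     (\<forall>x\<in>U. \<exists>e>0. \<forall>y\<in>lp p. lp_norm p (\<lambda>n. y n - x n) < e \<longrightarrow> y \<in> U)"

definition lp_borel :: "real \<Rightarrow> (nat \<Rightarrow> 'a::real_normed_field) measure" where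
  "lp_borel p = sigma (lp p) {U. lp_open p U}"

definition bounded_op :: "real \<Rightarrow> ((nat \<Rightarrow> 'a::real_normed_field) \<Rightarrow> (nat \<Rightarrow> 'a)) \<Rightarrow> bool" where
  "bounded_op p T \<longleftrightarrow> (\<forall>x\<in>lp p. T x \<in> lp p) \<and>
     (\<forall>x\<in>lp p. \<forall>y\<in>lp p. \<forall>a b. T (\<lambda>n. a * x n + b * y n) = (\<lambda>n. a * T x n + b * T y n)) \<and>
     (\<exists>C. \<forall>x\<in>lp p. lp_norm p (T x) \<le> C * lp_norm p x)"

definition similar_ops :: "real \<Rightarrow> ((nat \<Rightarrow> 'a::real_normed_field) \<Rightarrow> (nat \<Rightarrow> 'a)) \<Rightarrow> ((nat \<Rightarrow> 'a) \<Rightarrow> (nat \<Rightarrow> 'a)) \<Rightarrow> bool" where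
  "similar_ops p T1 T2 \<longleftrightarrow> (\<exists>J Ji. bounded_op p J \<and> bounded_op p Ji \<and>
     (\<forall>x\<in>lp p. J (Ji x) = x) \<and> (\<forall>x\<in>lp p. Ji (J x) = x) \<and>
     (\<forall>x\<in>lp p. T1 x = J (T2 (Ji x))))"

text \<open>Weighted backward shift: B e_0 = 0, B e_n = w_n e_{n-1}, i.e. (B x)_k = w_{k+1} x_{k+1}.\<close>
definition wshift :: "(nat \<Rightarrow> 'a::real_normed_field) \<Rightarrow> (nat \<Rightarrow> 'a) \<Rightarrow> (nat \<Rightarrow> 'a)" where
  "wshift w x = (\<lambda>k. w (Suc k) * x (Suc k))"

definition invariant_prob :: "real \<Rightarrow> ((nat \<Rightarrow> 'a::real_normed_field) \<Rightarrow> (nat \<Rightarrow> 'a)) \<Rightarrow> (nat \<Rightarrow> 'a) measure \<Rightarrow> bool" where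
  "invariant_prob p T m \<longleftrightarrow> prob_space m \<and> sets m = sets (lp_borel p) \<and> space m = lp p \<and>
     (\<forall>A\<in>sets (lp_borel p). emeasure m (T -` A \<inter> lp p) = emeasure m A)"

definition mutually_singular :: "'b measure \<Rightarrow> 'b measure \<Rightarrow> bool" where
  "mutually_singular m1 m2 \<longleftrightarrow>
     (\<exists>A\<in>sets m1. emeasure m1 A = 0 \<and> emeasure m2 (space m2 - A) = 0)"

definition orthogonal_ops :: "real \<Rightarrow> ((nat \<Rightarrow> 'a::real_normed_field) \<Rightarrow> (nat \<Rightarrow> 'a)) \<Rightarrow> ((nat \<Rightarrow> 'a) \<Rightarrow> (nat \<Rightarrow> 'a)) \<Rightarrow> bool" where
  "orthogonal_ops p T1 T2 \<longleftrightarrow> (\<forall>m1 m2. invariant_prob p T1 m1 \<and> invariant_prob p T2 m2 \<and>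
     emeasure m1 {\<lambda>n. 0} = 0 \<and> emeasure m2 {\<lambda>n. 0} = 0 \<longrightarrow> mutually_singular m1 m2)"

end

theory Submission
  imports Defs
begin

lemma lp_diff:
  fixes x y :: "nat \<Rightarrow> 'a::real_normed_field"
  assumes p: "0 < p" and x: "x \<in> lp p" and y: "y \<in> lp p"
  shows "(\<lambda>n. y n - x n) \<in> lp p"
proof -
  have sx: "summable (\<lambda>n. norm (x n) powr p)" and sy: "summable (\<lambda>n. norm (y n) powr p)"
    using x y by (auto simp: lp_def)
  have sg: "summable (\<lambda>n. 2 powr p * (norm (y n) powr p + norm (x n) powr p))"
    using sx sy by (intro summable_mult summable_add)
  moreover have b: "norm (norm (y n - x n) powr p) \<le> 2 powr p * (norm (y n) powr p + norm (x n) powr p)" for n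
  proof -
    have "norm (y n - x n) \<le> 2 * max (norm (y n)) (norm (x n))"
      using norm_triangle_ineq4[of "y n" "x n"] by linarith
    hence "norm (y n - x n) powr p \<le> (2 * max (norm (y n)) (norm (x n))) powr p"
      using p by (intro powr_mono2) auto
    also have "\<dots> = 2 powr p * max (norm (y n)) (norm (x n)) powr p"
      by (simp add: powr_mult)
    also have "\<dots> \<le> 2 powr p * (norm (y n) powr p + norm (x n) powr p)"
      by (intro mult_left_mono) (auto simp: max_def)
    finally show ?thesis by simp
  qed
  have "summable (\<lambda>n. norm (y n - x n) powr p)"
    by (rule summable_comparison_test'[OF sg b])
  thus ?thesis by (simp add: lp_def)
qed

lemma suminf_upper_bound_aux:
  fixes f :: "nat \<Rightarrow> real"
  assumes "summable f" "\<And>n. 0 \<le> f n" shows "f i \<le> suminf f"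
proof -
  have "sum f {i} \<le> suminf f" using assms by (intro sum_le_suminf) auto
  thus ?thesis by simp
qed

lemma coord_le_lp_norm:
  fixes z :: "nat \<Rightarrow> 'a::real_normed_field"
  assumes p: "0 < p" and z: "z \<in> lp p"
  shows "norm (z i) \<le> lp_norm p z"
proof -
  have s: "summable (\<lambda>n. norm (z n) powr p)" using z by (simp add: lp_def)
  have "norm (z i) powr p \<le> (\<Sum>n. norm (z n) powr p)"
    using s by (rule suminf_upper_bound_aux) auto
  hence "(norm (z i) powr p) powr (1/p) \<le> (\<Sum>n. norm (z n) powr p) powr (1/p)"
    using p by (intro powr_mono2) auto
  moreover have "(norm (z i) powr p) powr (1/p) = norm (z i)"
    using p by (simp add: powr_powr)
  ultimately show ?thesis by (simp add: lp_norm_def)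
qed

lemma space_lp_borel: "space (lp_borel p) = lp p"
  unfolding lp_borel_def by (rule space_measure_of) (auto simp: lp_open_def)

lemma sets_lp_borel: "sets (lp_borel p) = sigma_sets (lp p) {U. lp_open p U}"
  unfolding lp_borel_def by (rule sets_measure_of) (auto simp: lp_open_def)

lemma coord_measurable[measurable]:
  assumes p: "0 < p"
  shows "(\<lambda>x. x i) \<in> borel_measurable (lp_borel p)"
proof (rule borel_measurableI)
  fix S :: "'a set" assume S: "open S"
  have "lp_open p ((\<lambda>x. x i) -` S \<inter> lp p)"
    unfolding lp_open_def
  proof safe
    fix x assume x: "x \<in> lp p" "x i \<in> S"
    then obtain e where e: "e > 0" "ball (x i) e \<subseteq> S" using S open_contains_ball by blast
    show "\<exists>e>0. \<forall>y\<in>lp p. lp_norm p (\<lambda>n. y n - x n) < e \<longrightarrow> y \<in> (\<lambda>x. x i) -` S \<inter> lp p"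
    proof (intro exI[of _ e] conjI ballI impI)
      fix y assume y: "y \<in> lp p" "lp_norm p (\<lambda>n. y n - x n) < e"
      have "norm (y i - x i) \<le> lp_norm p (\<lambda>n. y n - x n)"
        using coord_le_lp_norm[OF p lp_diff[OF p x(1) y(1)]] by simp
      hence "y i \<in> ball (x i) e" using y by (simp add: dist_norm norm_minus_commute)
      thus "y \<in> (\<lambda>x. x i) -` S \<inter> lp p" using e y by auto
    qed (use e in auto)
  qed
  thus "(\<lambda>x. x i) -` S \<inter> space (lp_borel p) \<in> sets (lp_borel p)"
    by (simp add: space_lp_borel sets_lp_borel)
qed

lemma wshift_lp:
  fixes w :: "nat \<Rightarrow> 'a::real_normed_field"
  assumes p: "0 < p" and M: "\<forall>n\<ge>1. norm (w n) \<le> M" and x: "x \<in> lp p"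
  shows "wshift w x \<in> lp p"
proof -
  have M0: "0 \<le> M" using M[rule_format, of 1] norm_ge_zero[of "w 1"] by linarith
  have s: "summable (\<lambda>n. norm (x n) powr p)" using x by (simp add: lp_def)
  hence s1: "summable (\<lambda>n. norm (x (Suc n)) powr p)" by (subst summable_Suc_iff)
  hence sg: "summable (\<lambda>n. M powr p * norm (x (Suc n)) powr p)" by (rule summable_mult)
  have b: "norm (norm (w (Suc n) * x (Suc n)) powr p) \<le> M powr p * norm (x (Suc n)) powr p" for n
  proof -
    have "norm (w (Suc n) * x (Suc n)) powr p = norm (w (Suc n)) powr p * norm (x (Suc n)) powr p"
      by (simp add: norm_mult powr_mult)
    also have "\<dots> \<le> M powr p * norm (x (Suc n)) powr p"
      using M p by (intro mult_right_mono powr_mono2) auto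
    finally show ?thesis by simp
  qed
  have "summable (\<lambda>n. norm (w (Suc n) * x (Suc n)) powr p)"
    by (rule summable_comparison_test'[OF sg b])
  thus ?thesis by (simp add: lp_def wshift_def)
qed

lemma invariant_measurable:
  assumes inv: "invariant_prob p T m" and TS: "\<forall>x\<in>lp p. T x \<in> lp p"
  shows "T \<in> measurable m m" and "distr m m T = m"
proof -
  interpret prob_space m using inv by (simp add: invariant_prob_def)
  have sets: "sets m = sets (lp_borel p)" and sp: "space m = lp p"
    and I: "\<And>A. A \<in> sets (lp_borel p) \<Longrightarrow> emeasure m (T -` A \<inter> lp p) = emeasure m A"
    using inv by (auto simp: invariant_prob_def)
  have pre: "T -` A \<inter> lp p \<in> sets m" if A: "A \<in> sets m" for A
  proof (rule ccontr)
    assume nP: "T -` A \<inter> lp p \<notin> sets m"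
    have A': "lp p - A \<in> sets m" using A sp by (metis sets.compl_sets)
    have eq: "T -` (lp p - A) \<inter> lp p = lp p - (T -` A \<inter> lp p)" using TS by auto
    have nQ: "T -` (lp p - A) \<inter> lp p \<notin> sets m"
    proof
      assume "T -` (lp p - A) \<inter> lp p \<in> sets m"
      hence "lp p - (T -` (lp p - A) \<inter> lp p) \<in> sets m" using sp by (metis sets.compl_sets)
      moreover have "lp p - (T -` (lp p - A) \<inter> lp p) = T -` A \<inter> lp p" using eq by auto
      ultimately show False using nP by simp
    qed
    have "emeasure m (T -` A \<inter> lp p) = 0" using nP by (rule emeasure_notin_sets)
    hence e1: "emeasure m A = 0" using I[of A] A sets by simp
    have "emeasure m (T -` (lp p - A) \<inter> lp p) = 0" using nQ by (rule emeasure_notin_sets)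
    hence e2: "emeasure m (lp p - A) = 0" using I[of "lp p - A"] A' sets by simp
    have sub: "A \<subseteq> lp p" using A sp sets.sets_into_space by blast
    have "emeasure m A + emeasure m (lp p - A) = emeasure m (A \<union> (lp p - A))"
      by (rule plus_emeasure[OF A A']) blast
    also have "A \<union> (lp p - A) = space m" using sub sp by blast
    finally have "emeasure m (space m) = 0" using e1 e2 by simp
    thus False using emeasure_space_1 by simp
  qed
  show meas: "T \<in> measurable m m"
    unfolding measurable_def
  proof (intro CollectI conjI ballI)
    show "T \<in> space m \<rightarrow> space m" using TS sp by auto
  next
    fix A assume "A \<in> sets m" thus "T -` A \<inter> space m \<in> sets m" using pre sp by simp
  qed
  show "distr m m T = m"
  proof (rule measure_eqI)
    show "sets (distr m m T) = sets m" by simp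
    fix A assume "A \<in> sets (distr m m T)"
    hence A: "A \<in> sets m" by simp
    show "emeasure (distr m m T) A = emeasure m A"
      proof -
      have "emeasure (distr m m T) A = emeasure m (T -` A \<inter> space m)"
        by (rule emeasure_distr[OF meas A])
      also have "\<dots> = emeasure m A" using sp I[of A] A sets by simp
      finally show ?thesis .
    qed
  qed
qed

lemma integral_invariant:
  fixes f :: "_ \<Rightarrow> real"
  assumes inv: "invariant_prob p T m" and TS: "\<forall>x\<in>lp p. T x \<in> lp p"
    and f: "f \<in> borel_measurable (lp_borel p)"
  shows "(\<integral>x. f x \<partial>m) = (\<integral>x. f (T x) \<partial>m)"
proof -
  have sets: "sets m = sets (lp_borel p)" using inv by (simp add: invariant_prob_def)
  have f': "f \<in> borel_measurable m" by (subst measurable_cong_sets[OF sets refl]) (rule f)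
  have "(\<integral>x. f x \<partial>m) = (\<integral>x. f x \<partial>(distr m m T))"
    using invariant_measurable(2)[OF inv TS] by (simp only:)
  also have "\<dots> = (\<integral>x. f (T x) \<partial>m)"
    by (rule integral_distr[OF invariant_measurable(1)[OF inv TS] f'])
  finally show ?thesis .
qed

lemma diag_bounded:
  fixes d :: "nat \<Rightarrow> 'a::real_normed_field"
  assumes p: "0 < p" and C: "\<forall>n. norm (d n) \<le> C"
  shows "bounded_op p (\<lambda>x n. d n * x n)"
proof -
  have C0: "0 \<le> C" using C[rule_format, of 0] norm_ge_zero[of "d 0"] by linarith
  have b: "norm (norm (d n * x n) powr p) \<le> C powr p * norm (x n) powr p" for n and x :: "nat \<Rightarrow> 'a"
  proof -
    have "norm (d n * x n) powr p = norm (d n) powr p * norm (x n) powr p"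
      by (simp add: norm_mult powr_mult)
    also have "\<dots> \<le> C powr p * norm (x n) powr p"
      using C p by (intro mult_right_mono powr_mono2) auto
    finally show ?thesis by simp
  qed
  have main: "summable (\<lambda>n. norm (d n * x n) powr p) \<and>
      lp_norm p (\<lambda>n. d n * x n) \<le> C * lp_norm p x" if x: "x \<in> lp p" for x
  proof
    have s: "summable (\<lambda>n. norm (x n) powr p)" using x by (simp add: lp_def)
    hence sg: "summable (\<lambda>n. C powr p * norm (x n) powr p)" by (rule summable_mult)
    show s2: "summable (\<lambda>n. norm (d n * x n) powr p)"
      by (rule summable_comparison_test'[OF sg b[of _ x]])
    have "(\<Sum>n. norm (d n * x n) powr p) \<le> (\<Sum>n. C powr p * norm (x n) powr p)"
      using b s2 sg by (intro suminf_le) auto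
    also have "\<dots> = C powr p * (\<Sum>n. norm (x n) powr p)" using s by (rule suminf_mult)
    finally have le: "(\<Sum>n. norm (d n * x n) powr p) \<le> C powr p * (\<Sum>n. norm (x n) powr p)" .
    have "lp_norm p (\<lambda>n. d n * x n) \<le> (C powr p * (\<Sum>n. norm (x n) powr p)) powr (1/p)"
      unfolding lp_norm_def using p le by (intro powr_mono2 suminf_nonneg s2; auto)
    also have "\<dots> = (C powr p) powr (1/p) * (\<Sum>n. norm (x n) powr p) powr (1/p)"
      using s by (intro powr_mult; auto intro: suminf_nonneg)
    also have "(C powr p) powr (1/p) = C" using p C0 by (simp add: powr_powr)
    finally show "lp_norm p (\<lambda>n. d n * x n) \<le> C * lp_norm p x" by (simp add: lp_norm_def)
  qed
  show ?thesis unfolding bounded_op_def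
  proof (intro conjI ballI allI exI[of _ C])
    fix x :: "nat \<Rightarrow> 'a" assume "x \<in> lp p"
    thus "(\<lambda>n. d n * x n) \<in> lp p" using main by (simp add: lp_def)
  next
    fix x :: "nat \<Rightarrow> 'a" assume "x \<in> lp p"
    thus "lp_norm p (\<lambda>n. d n * x n) \<le> C * lp_norm p x" using main by simp
  next
    fix x y :: "nat \<Rightarrow> 'a" and a b :: 'a
    show "(\<lambda>n. d n * (a * x n + b * y n)) = (\<lambda>n. a * (d n * x n) + b * (d n * y n))"
      by (simp add: algebra_simps)
  qed
qed

lemma similar_diag:
  fixes d u v :: "nat \<Rightarrow> 'a::real_normed_field"
  assumes p: "0 < p" and nz: "\<forall>n. d n \<noteq> 0"
    and C: "\<forall>n. norm (d n) \<le> C" and C': "\<forall>n. norm (inverse (d n)) \<le> C"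
    and rec: "\<forall>n. d (Suc n) * u (Suc n) = d n * v (Suc n)"
  shows "similar_ops p (wshift u) (wshift v)"
  unfolding similar_ops_def
proof (intro exI conjI ballI)
  show "bounded_op p (\<lambda>x n. d n * x n)" by (rule diag_bounded[OF p C])
  show "bounded_op p (\<lambda>x n. inverse (d n) * x n)" by (rule diag_bounded[OF p C'])
  fix x :: "nat \<Rightarrow> 'a"
  show "(\<lambda>n. d n * (inverse (d n) * x n)) = x" using nz by (simp add: field_simps)
  show "(\<lambda>n. inverse (d n) * (d n * x n)) = x" using nz by (simp add: field_simps)
  show "wshift u x = (\<lambda>n. d n * wshift v (\<lambda>n. inverse (d n) * x n) n)"
  proof
    fix k
    have "d k * (v (Suc k) * (inverse (d (Suc k)) * x (Suc k))) =
        (d k * v (Suc k)) * inverse (d (Suc k)) * x (Suc k)" by (simp add: algebra_simps)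
    also have "\<dots> = u (Suc k) * x (Suc k)"
      using rec[rule_format, of k, symmetric] nz[rule_format, of "Suc k"] by (simp add: field_simps)
    finally have eq: "d k * (v (Suc k) * (inverse (d (Suc k)) * x (Suc k))) = u (Suc k) * x (Suc k)" .
    show "wshift u x k = d k * wshift v (\<lambda>n. inverse (d n) * x n) k"
      unfolding wshift_def by (rule eq[symmetric])
  qed
qed

definition pu :: "(nat \<Rightarrow> 'a::real_normed_field) \<Rightarrow> nat \<Rightarrow> real" where
  "pu w n = (\<Prod>i\<in>{1..n}. norm (w i))"

lemma pu_0[simp]: "pu w 0 = 1" by (simp add: pu_def)

lemma pu_Suc: "pu w (Suc n) = pu w n * norm (w (Suc n))"
  unfolding pu_def by (simp add: atLeastAtMostSuc_conv mult.commute)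

lemma pu_pos: assumes "\<forall>n\<ge>1. w n \<noteq> 0" shows "pu w n > 0"
  unfolding pu_def using assms by (intro prod_pos) auto

lemma pu_upper: assumes "\<forall>n\<ge>1. norm (w n) \<le> M" "0 \<le> M" shows "pu w (n + j) \<le> pu w n * M ^ j"
proof (induction j)
  case (Suc j)
  have "pu w (n + Suc j) = pu w (n + j) * norm (w (Suc (n + j)))" by (simp add: pu_Suc)
  also have "\<dots> \<le> (pu w n * M ^ j) * M"
    using Suc assms by (intro mult_mono) (auto simp: pu_def prod_nonneg)
  finally show ?case by (simp add: algebra_simps)
qed simp

lemma pu_lower: assumes "\<forall>n\<ge>1. c \<le> norm (w n)" "0 \<le> c" shows "pu w n * c ^ j \<le> pu w (n + j)"
proof (induction j)
  case (Suc j)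
  have "pu w n * c ^ Suc j = (pu w n * c ^ j) * c" by (simp add: algebra_simps)
  also have "\<dots> \<le> pu w (n + j) * norm (w (Suc (n + j)))"
    using Suc assms by (intro mult_mono) (auto simp: pu_def prod_nonneg)
  also have "\<dots> = pu w (n + Suc j)" by (simp add: pu_Suc)
  finally show ?case .
qed simp

lemma mu1_shift:
  fixes u :: "nat \<Rightarrow> 'a::real_normed_field"
  assumes p: "0 < p" and Mu: "\<forall>n\<ge>1. norm (u n) \<le> Mu" and inv: "invariant_prob p (wshift u) m"
  shows "(\<integral>x. min 1 (s * pu u i * norm (x i)) \<partial>m) = (\<integral>x. min 1 (s * norm (x 0)) \<partial>m)"
proof (induction i)
  case (Suc i)
  note coord_measurable[OF p, measurable]
  have TS: "\<forall>x\<in>lp p. wshift u x \<in> lp p" using wshift_lp[OF p Mu] by blast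
  have "(\<integral>x. min 1 (s * pu u i * norm (x i)) \<partial>m) = (\<integral>x. min 1 (s * pu u i * norm (wshift u x i)) \<partial>m)"
    by (rule integral_invariant[OF inv TS]) measurable
  also have "\<dots> = (\<integral>x. min 1 (s * pu u (Suc i) * norm (x (Suc i))) \<partial>m)"
    by (simp add: wshift_def pu_Suc norm_mult mult.assoc)
  finally show ?case using Suc by simp
qed simp

lemma F_small:
  fixes m :: "(nat \<Rightarrow> 'a::real_normed_field) measure"
  assumes p: "0 < p" and inv: "invariant_prob p T m" and e: "e > 0"
  shows "\<exists>\<delta>>0. \<forall>s. 0 \<le> s \<longrightarrow> s \<le> \<delta> \<longrightarrow> (\<integral>x. min 1 (s * norm (x 0)) \<partial>m) \<le> e"
proof -
  interpret prob_space m using inv by (simp add: invariant_prob_def)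
  have sets: "sets m = sets (lp_borel p)" using inv by (simp add: invariant_prob_def)
  note coord_measurable[OF p, measurable]
  have meas: "(\<lambda>x. min 1 (s * norm (x 0))) \<in> borel_measurable m" for s
    by (subst measurable_cong_sets[OF sets refl]) measurable
  have intg: "integrable m (\<lambda>x. min 1 (s * norm (x 0)))" if "0 \<le> s" for s
    by (rule integrable_const_bound[where B=1]) (use that meas in auto)
  have "(\<lambda>k. \<integral>x. min 1 (1 / real (Suc k) * norm (x 0)) \<partial>m) \<longlonglongrightarrow> (\<integral>x. 0 \<partial>m)"
  proof (rule integral_dominated_convergence[where w="\<lambda>_. 1"])
    show "(\<lambda>x. 0::real) \<in> borel_measurable m" by simp
    show "\<And>i. (\<lambda>x. min 1 (1 / real (Suc i) * norm (x 0))) \<in> borel_measurable m" by (rule meas)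
    show "integrable m (\<lambda>_. 1::real)" by simp
    show "AE x in m. (\<lambda>i. min 1 (1 / real (Suc i) * norm (x 0))) \<longlonglongrightarrow> 0"
    proof (rule AE_I2)
      fix x :: "nat \<Rightarrow> 'a"
      have "(\<lambda>i. 1 / real (Suc i) * norm (x 0)) \<longlonglongrightarrow> 0 * norm (x 0)"
        by (intro tendsto_mult LIMSEQ_Suc[OF lim_inverse_n'] tendsto_const)
      hence "(\<lambda>i. min 1 (1 / real (Suc i) * norm (x 0))) \<longlonglongrightarrow> min 1 (0 * norm (x 0))"
        by (intro tendsto_min tendsto_const)
      thus "(\<lambda>i. min 1 (1 / real (Suc i) * norm (x 0))) \<longlonglongrightarrow> 0" by simp
    qed
    show "\<And>i. AE x in m. norm (min 1 (1 / real (Suc i) * norm (x 0))) \<le> 1" by auto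
  qed
  hence "(\<lambda>k. \<integral>x. min 1 (1 / real (Suc k) * norm (x 0)) \<partial>m) \<longlonglongrightarrow> 0" by simp
  from order_tendstoD(2)[OF this e]
  obtain N where "\<forall>k\<ge>N. (\<integral>x. min 1 (1 / real (Suc k) * norm (x 0)) \<partial>m) < e"
    unfolding eventually_sequentially by blast
  then obtain k where k: "(\<integral>x. min 1 (1 / real (Suc k) * norm (x 0)) \<partial>m) < e" by blast
  show ?thesis
  proof (intro exI[of _ "1 / real (Suc k)"] conjI allI impI)
    fix s :: real assume s: "0 \<le> s" "s \<le> 1 / real (Suc k)"
    have "(\<integral>x. min 1 (s * norm (x 0)) \<partial>m) \<le> (\<integral>x. min 1 (1 / real (Suc k) * norm (x 0)) \<partial>m)"
    proof (rule integral_mono[OF intg intg])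
      fix x :: "nat \<Rightarrow> 'a"
      have "s * norm (x 0) \<le> 1 / real (Suc k) * norm (x 0)" using s by (intro mult_right_mono) auto
      thus "min 1 (s * norm (x 0)) \<le> min 1 (1 / real (Suc k) * norm (x 0))" by (rule min.mono[OF order_refl])
    qed (use s in auto)
    thus "(\<integral>x. min 1 (s * norm (x 0)) \<partial>m) \<le> e" using k by simp
  qed simp
qed

lemma choose_n:
  fixes u v :: "nat \<Rightarrow> 'a::real_normed_field" and m1
  assumes p: "0 < p" and unz: "\<forall>n\<ge>1. u n \<noteq> 0"
    and Mu: "\<forall>n\<ge>1. norm (u n) \<le> Mu" and Mv: "\<forall>n\<ge>1. norm (v n) \<le> Mv" and Mv0: "0 \<le> Mv"
    and cu: "cu > 0" "\<forall>n\<ge>1. cu \<le> norm (u n)"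
    and inv1: "invariant_prob p (wshift u) m1"
    and unb: "\<forall>\<delta>>0. \<exists>n. pu v n \<le> \<delta> * pu u n"
  shows "\<exists>n. \<forall>j\<le>k. (\<integral>x. min 1 (pu v (j+n) * norm (x (j+n))) \<partial>m1) \<le> (1/2)^k"
proof -
  define R where "R = max 1 (Mv / cu)"
  have R1: "1 \<le> R" by (simp add: R_def)
  have MvR: "Mv \<le> R * cu"
  proof -
    have "Mv = (Mv / cu) * cu" using cu by simp
    also have "\<dots> \<le> R * cu" using cu by (intro mult_right_mono) (auto simp: R_def)
    finally show ?thesis .
  qed
  obtain \<delta> where d: "\<delta> > 0" and dF: "\<forall>s. 0 \<le> s \<longrightarrow> s \<le> \<delta> \<longrightarrow> (\<integral>x. min 1 (s * norm (x 0)) \<partial>m1) \<le> (1/2)^k"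
    using F_small[OF p inv1, of "(1/2)^k"] by auto
  have "\<delta> / R^k > 0" using d R1 by simp
  then obtain n where n: "pu v n \<le> (\<delta> / R^k) * pu u n" using unb by blast
  show ?thesis
  proof (intro exI[of _ n] allI impI)
    fix j assume jk: "j \<le> k"
    have puu: "pu u i > 0" for i using pu_pos[OF unz] .
    have "pu v (n+j) \<le> pu v n * Mv^j" by (rule pu_upper[OF Mv Mv0])
    also have "\<dots> \<le> ((\<delta> / R^k) * pu u n) * (R^j * cu^j)"
    proof (rule mult_mono[OF n])
      have "Mv^j \<le> (R*cu)^j" using MvR Mv0 by (intro power_mono) auto
      thus "Mv^j \<le> R^j * cu^j" by (simp add: power_mult_distrib)
    next
      show "0 \<le> Mv^j" using Mv0 by simp
      have "0 < \<delta> * pu u n / R ^ k" using d puu[of n] R1 by simp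
      thus "0 \<le> \<delta> / R ^ k * pu u n" by simp
    qed
    also have "\<dots> = \<delta> * (R^j / R^k) * (pu u n * cu^j)" by (simp add: field_simps)
    also have "\<dots> \<le> \<delta> * 1 * (pu u n * cu^j)"
    proof (intro mult_right_mono mult_left_mono)
      have "R^j \<le> R^k" using power_increasing[OF jk R1] .
      thus "R^j / R^k \<le> 1" using R1 by simp
    qed (use d puu[of n] cu in \<open>auto intro!: mult_nonneg_nonneg less_imp_le\<close>)
    also have "\<dots> \<le> \<delta> * pu u (n+j)" using pu_lower[OF cu(2), of n j] cu d by simp
    finally have le: "pu v (n+j) \<le> \<delta> * pu u (n+j)" .
    define s where "s = pu v (j+n) / pu u (j+n)"
    have s0: "0 \<le> s" using puu by (simp add: s_def pu_def prod_nonneg)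
    have sd: "s \<le> \<delta>" using le puu[of "j+n"] by (simp add: s_def add.commute divide_le_eq)
    have "(\<integral>x. min 1 (pu v (j+n) * norm (x (j+n))) \<partial>m1) = (\<integral>x. min 1 (s * pu u (j+n) * norm (x (j+n))) \<partial>m1)"
      using puu[of "j+n"] by (simp add: s_def)
    also have "\<dots> = (\<integral>x. min 1 (s * norm (x 0)) \<partial>m1)" by (rule mu1_shift[OF p Mu inv1])
    also have "\<dots> \<le> (1/2)^k" using dF s0 sd by blast
    finally show "(\<integral>x. min 1 (pu v (j+n) * norm (x (j+n))) \<partial>m1) \<le> (1/2)^k" .
  qed
qed

lemma main_sing:
  fixes u v :: "nat \<Rightarrow> 'a::real_normed_field" and m1 m2
  assumes p: "0 < p" and unz: "\<forall>n\<ge>1. u n \<noteq> 0" and vnz: "\<forall>n\<ge>1. v n \<noteq> 0"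
    and Mu: "\<forall>n\<ge>1. norm (u n) \<le> Mu" and Mv: "\<forall>n\<ge>1. norm (v n) \<le> Mv"
    and cu: "cu > 0" "\<forall>n\<ge>1. cu \<le> norm (u n)"
    and inv1: "invariant_prob p (wshift u) m1" and inv2: "invariant_prob p (wshift v) m2"
    and z2: "emeasure m2 {\<lambda>n. 0} = 0"
    and unb: "\<forall>\<delta>>0. \<exists>n. pu v n \<le> \<delta> * pu u n"
  shows "\<exists>E\<in>sets (lp_borel p). emeasure m1 (lp p - E) = 0 \<and> emeasure m2 E = 0"
proof -
  interpret m1: prob_space m1 using inv1 by (simp add: invariant_prob_def)
  interpret m2: prob_space m2 using inv2 by (simp add: invariant_prob_def)
  have sets1: "sets m1 = sets (lp_borel p)" and sp1: "space m1 = lp p"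
    using inv1 by (auto simp: invariant_prob_def)
  have sets2: "sets m2 = sets (lp_borel p)" and sp2: "space m2 = lp p"
    using inv2 by (auto simp: invariant_prob_def)
  note coord_measurable[OF p, measurable]
  have Mv0: "0 \<le> Mv" using Mv[rule_format, of 1] norm_ge_zero[of "v 1"] by linarith
  have "\<forall>k. \<exists>n. \<forall>j\<le>k. (\<integral>x. min 1 (pu v (j+n) * norm (x (j+n))) \<partial>m1) \<le> (1/2)^k"
    using choose_n[OF p unz Mu Mv Mv0 cu inv1 unb] by blast
  then obtain nk where nk: "\<And>k j. j \<le> k \<Longrightarrow> (\<integral>x. min 1 (pu v (j + nk k) * norm (x (j + nk k))) \<partial>m1) \<le> (1/2)^k"
    by metis
  define \<psi> where "\<psi> j k x = min 1 (pu v (j + nk k) * norm (x (j + nk k)))" for j k and x :: "nat \<Rightarrow> 'a"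
  have \<psi>_meas[measurable]: "(\<lambda>x. \<psi> j k x) \<in> borel_measurable (lp_borel p)" for j k
    unfolding \<psi>_def by measurable
  have \<psi>_nn: "0 \<le> \<psi> j k x" for j k x unfolding \<psi>_def by (simp add: pu_def prod_nonneg)
  have \<psi>_le1: "\<psi> j k x \<le> 1" for j k x unfolding \<psi>_def by simp
  define E where "E = {x \<in> lp p. \<forall>j. (\<Sum>k. ennreal (\<psi> j k x)) < top}"
  have Esets[measurable]: "E \<in> sets (lp_borel p)"
  proof -
    have "E = {x \<in> space (lp_borel p). \<forall>j. (\<Sum>k. ennreal (\<psi> j k x)) < top}"
      by (simp add: E_def space_lp_borel)
    also have "\<dots> \<in> sets (lp_borel p)" by measurable
    finally show ?thesis .
  qed
  have Esub: "E \<subseteq> lp p" by (auto simp: E_def)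
  have m1E: "emeasure m1 (lp p - E) = 0"
  proof -
    have \<psi>_meas1: "(\<lambda>x. \<psi> j k x) \<in> borel_measurable m1" for j k
      by (subst measurable_cong_sets[OF sets1 refl]) (rule \<psi>_meas)
    have intg1: "integrable m1 (\<lambda>x. \<psi> j k x)" for j k
      by (rule m1.integrable_const_bound[where B=1]) (use \<psi>_meas1 \<psi>_nn \<psi>_le1 in auto)
    have int_le: "(\<integral>x. \<psi> j k x \<partial>m1) \<le> 2^j * (1/2)^k" for j k
    proof (cases "j \<le> k")
      case True
      have "(\<integral>x. \<psi> j k x \<partial>m1) \<le> (1/2)^k" using nk[OF True] by (simp add: \<psi>_def)
      also have "\<dots> \<le> 2^j * (1/2)^k" by simp
      finally show ?thesis .
    next
      case False
      have "(\<integral>x. \<psi> j k x \<partial>m1) \<le> (\<integral>x. 1 \<partial>m1)"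
        by (intro integral_mono intg1) (auto simp: \<psi>_le1)
      also have "\<dots> = 1" by (simp add: m1.prob_space)
      also have "1 \<le> (2::real)^j * (1/2)^k"
      proof -
        have "(2::real)^k \<le> 2^j" using False by (intro power_increasing) auto
        thus ?thesis by (simp add: power_one_over field_simps)
      qed
      finally show ?thesis .
    qed
    have AEj: "AE x in m1. (\<Sum>k. ennreal (\<psi> j k x)) \<noteq> \<infinity>" for j
    proof (rule nn_integral_PInf_AE)
      show "(\<lambda>x. \<Sum>k. ennreal (\<psi> j k x)) \<in> borel_measurable m1"
        by (subst measurable_cong_sets[OF sets1 refl]) measurable
      have "(\<integral>\<^sup>+x. (\<Sum>k. ennreal (\<psi> j k x)) \<partial>m1) = (\<Sum>k. \<integral>\<^sup>+x. ennreal (\<psi> j k x) \<partial>m1)"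
        by (rule nn_integral_suminf) (use \<psi>_meas1 in measurable)
      also have "\<dots> \<le> (\<Sum>k. ennreal (2^j * (1/2)^k))"
      proof (rule suminf_le[OF _ summableI summableI])
        fix k
        have "(\<integral>\<^sup>+x. ennreal (\<psi> j k x) \<partial>m1) = ennreal (\<integral>x. \<psi> j k x \<partial>m1)"
          by (rule nn_integral_eq_integral[OF intg1]) (simp add: \<psi>_nn)
        also have "\<dots> \<le> ennreal (2^j * (1/2)^k)" by (rule ennreal_leI[OF int_le])
        finally show "(\<integral>\<^sup>+x. ennreal (\<psi> j k x) \<partial>m1) \<le> ennreal (2^j * (1/2)^k)" .
      qed
      also have "\<dots> = ennreal (\<Sum>k. 2^j * (1/2::real)^k)"
        by (rule suminf_ennreal2) (auto intro!: summable_mult summable_geometric)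
      finally show "(\<integral>\<^sup>+x. (\<Sum>k. ennreal (\<psi> j k x)) \<partial>m1) \<noteq> \<infinity>"
        using ennreal_less_top[of "\<Sum>k. 2 ^ j * (1 / 2::real) ^ k"] by (auto simp: top_unique dest: le_less_trans)
    qed
    have "AE x in m1. x \<in> E"
    proof -
      have "AE x in m1. \<forall>j. (\<Sum>k. ennreal (\<psi> j k x)) \<noteq> \<infinity>"
        unfolding AE_all_countable using AEj by blast
      thus ?thesis using AE_space by eventually_elim (auto simp: E_def sp1 less_top)
    qed
    moreover have "lp p - E \<in> sets m1"
    proof -
      have "space (lp_borel p) - E \<in> sets (lp_borel p)" using Esets by (rule sets.compl_sets)
      thus ?thesis unfolding sets1 space_lp_borel .
    qed
    moreover have "{x \<in> space m1. \<not> x \<in> E} = lp p - E" unfolding sp1 by blast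
    ultimately show ?thesis using AE_iff_measurable[of "lp p - E" m1 "\<lambda>x. x \<in> E"] by simp
  qed
  have m2E: "emeasure m2 E = 0"
  proof -
    define B where "B = wshift v"
    have TS: "\<forall>x\<in>lp p. B x \<in> lp p" using wshift_lp[OF p Mv] by (simp add: B_def)
    have Bmeas: "B \<in> measurable m2 m2" using invariant_measurable(1)[OF inv2] TS by (simp add: B_def)
    have \<psi>B: "\<psi> j k (B x) = \<psi> (Suc j) k x" for j k x
      by (simp add: \<psi>_def B_def wshift_def pu_Suc norm_mult mult.assoc)
    have step: "B x \<in> E" if "x \<in> E" for x
    proof -
      have "B x \<in> lp p" using that TS Esub by blast
      moreover have "(\<Sum>k. ennreal (\<psi> j k (B x))) < top" for j
        using that unfolding \<psi>B E_def by blast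
      ultimately show ?thesis by (simp add: E_def)
    qed
    have BE: "B -` E \<inter> lp p \<in> sets m2"
      using measurable_sets[OF Bmeas, of E] Esets sets2 sp2 by simp
    have Esets2: "E \<in> sets m2" using Esets sets2 by simp
    have EBE: "E \<subseteq> B -` E \<inter> lp p" using step Esub by blast
    have "emeasure m2 (B -` E \<inter> lp p) = emeasure m2 E"
      using inv2 Esets by (simp add: invariant_prob_def B_def)
    hence "emeasure m2 ((B -` E \<inter> lp p) - E) = 0"
      using emeasure_Diff[OF _ BE Esets2 EBE] m2.emeasure_finite[of E] by simp
    moreover have "{x \<in> space m2. \<not> (B x \<in> E \<longrightarrow> x \<in> E)} = (B -` E \<inter> lp p) - E"
      unfolding sp2 by blast
    moreover have "(B -` E \<inter> lp p) - E \<in> sets m2" using BE Esets2 by blast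
    ultimately have AEback: "AE x in m2. B x \<in> E \<longrightarrow> x \<in> E"
      using AE_iff_measurable[of "(B -` E \<inter> lp p) - E" m2 "\<lambda>x. B x \<in> E \<longrightarrow> x \<in> E"] by simp
    have AEind: "AE x in m2. indicator E (B x) = (indicator E x :: real)"
      using AEback by eventually_elim (auto simp: indicator_def dest: step)
    define f where "f i x = indicator E x * min 1 (pu v i * norm (x i))" for i and x :: "nat \<Rightarrow> 'a"
    have f_meas: "(\<lambda>x. f i x) \<in> borel_measurable (lp_borel p)" for i
      unfolding f_def by measurable
    have f_meas2: "(\<lambda>x. f i x) \<in> borel_measurable m2" for i
      by (subst measurable_cong_sets[OF sets2 refl]) (rule f_meas)
    have fB_meas2: "(\<lambda>x. f i (B x)) \<in> borel_measurable m2" for i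
      by (rule measurable_compose[OF Bmeas f_meas2])
    have f_nn: "0 \<le> f i x" for i x by (simp add: f_def pu_def prod_nonneg)
    have f_le: "f i x \<le> 1" for i x by (simp add: f_def indicator_def)
    have intg2: "integrable m2 (\<lambda>x. f i x)" for i
      by (rule m2.integrable_const_bound[where B=1]) (use f_meas2 f_nn f_le in auto)
    have fstep: "(\<integral>x. f i x \<partial>m2) = (\<integral>x. f (Suc i) x \<partial>m2)" for i
    proof -
      have "(\<integral>x. f i x \<partial>m2) = (\<integral>x. f i (B x) \<partial>m2)"
        unfolding B_def by (rule integral_invariant[OF inv2 TS[unfolded B_def] f_meas])
      also have "\<dots> = (\<integral>x. f (Suc i) x \<partial>m2)"
      proof (rule integral_cong_AE[OF fB_meas2 f_meas2])
        show "AE x in m2. f i (B x) = f (Suc i) x"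
          using AEind by eventually_elim
            (simp add: f_def B_def wshift_def pu_Suc norm_mult mult.assoc)
      qed
      finally show ?thesis .
    qed
    have fshift: "(\<integral>x. f (j + n) x \<partial>m2) = (\<integral>x. f j x \<partial>m2)" for j n
      by (induction n) (simp_all add: fstep[symmetric])
    have AE0: "AE x in m2. x \<in> E \<longrightarrow> x j = 0" for j
    proof -
      have "(\<lambda>k. \<integral>x. f (j + nk k) x \<partial>m2) \<longlonglongrightarrow> (\<integral>x. 0 \<partial>m2)"
      proof (rule integral_dominated_convergence[where w="\<lambda>_. 1"])
        show "(\<lambda>x. 0::real) \<in> borel_measurable m2" by simp
        show "\<And>k. (\<lambda>x. f (j + nk k) x) \<in> borel_measurable m2" by (rule f_meas2)
        show "integrable m2 (\<lambda>_. 1::real)" by simp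
        show "\<And>k. AE x in m2. norm (f (j + nk k) x) \<le> 1" using f_nn f_le by auto
        show "AE x in m2. (\<lambda>k. f (j + nk k) x) \<longlonglongrightarrow> 0"
        proof (rule AE_I2)
          fix x :: "nat \<Rightarrow> 'a"
          show "(\<lambda>k. f (j + nk k) x) \<longlonglongrightarrow> 0"
          proof (cases "x \<in> E")
            case True
            hence "(\<Sum>k. ennreal (\<psi> j k x)) < top" by (auto simp: E_def)
            hence "(\<Sum>k. ennreal (\<psi> j k x)) \<noteq> top" by simp
            hence "summable (\<lambda>k. \<psi> j k x)" using \<psi>_nn by (intro summable_suminf_not_top) auto
            hence "(\<lambda>k. \<psi> j k x) \<longlonglongrightarrow> 0" by (rule summable_LIMSEQ_zero)
            moreover have "f (j + nk k) x = \<psi> j k x" for k using True by (simp add: f_def \<psi>_def)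
            ultimately show ?thesis by simp
          next
            case False
            thus ?thesis by (simp add: f_def)
          qed
        qed
      qed
      hence "(\<lambda>k. \<integral>x. f j x \<partial>m2) \<longlonglongrightarrow> 0" by (simp add: fshift)
      hence "(\<integral>x. f j x \<partial>m2) = 0" by (simp add: LIMSEQ_const_iff)
      hence "AE x in m2. f j x = 0"
        using integral_nonneg_eq_0_iff_AE[OF intg2] f_nn by simp
      moreover have pos: "pu v j > 0" by (rule pu_pos[OF vnz])
      ultimately show ?thesis
        by eventually_elim (use pos in \<open>auto simp: f_def min_def split: if_splits\<close>)
    qed
    have "AE x in m2. \<forall>j. x \<in> E \<longrightarrow> x j = 0"
      unfolding AE_all_countable using AE0 by blast
    moreover have "AE x in m2. x \<noteq> (\<lambda>n. 0)"
    proof -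
      have Zl: "(\<lambda>n. 0::'a) \<in> lp p" using p by (simp add: lp_def)
      have "{\<lambda>n. 0::'a} = {x \<in> space (lp_borel p). \<forall>i. x i = 0}"
        using Zl by (auto simp: space_lp_borel)
      also have "\<dots> \<in> sets (lp_borel p)" by measurable
      finally have Zs: "{\<lambda>n. 0::'a} \<in> sets m2" using sets2 by simp
      have "{x \<in> space m2. \<not> x \<noteq> (\<lambda>n. 0)} = {\<lambda>n. 0}" using Zl sp2 by auto
      thus ?thesis using AE_iff_measurable[OF Zs, of "\<lambda>x. x \<noteq> (\<lambda>n. 0)"] z2 by simp
    qed
    ultimately have "AE x in m2. x \<notin> E" by eventually_elim auto
    moreover have "{x \<in> space m2. \<not> x \<notin> E} = E" using Esub sp2 by auto
    ultimately show ?thesis using AE_iff_measurable[OF Esets2, of "\<lambda>x. x \<notin> E"] by simp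
  qed
  show ?thesis using Esets m1E m2E by blast
qed

theorem corollary3p11:
  fixes p :: real and u v :: "nat \<Rightarrow> 'a::{real_normed_field, banach}"
  assumes "1 \<le> p"
    and "\<forall>n\<ge>1. u n \<noteq> 0" and "\<forall>n\<ge>1. v n \<noteq> 0"
    and "\<exists>M. \<forall>n\<ge>1. norm (u n) \<le> M" and "\<exists>M. \<forall>n\<ge>1. norm (v n) \<le> M"
    and "\<exists>c>0. \<forall>n\<ge>1. c \<le> norm (u n)" and "\<exists>c>0. \<forall>n\<ge>1. c \<le> norm (v n)"
    and "\<not> similar_ops p (wshift u) (wshift v)"
  shows "orthogonal_ops p (wshift u) (wshift v)"
proof -
  have p: "0 < p" using assms(1) by simp
  note unz = assms(2) and vnz = assms(3)
  obtain Mu where Mu: "\<forall>n\<ge>1. norm (u n) \<le> Mu" using assms(4) by blast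
  obtain Mv where Mv: "\<forall>n\<ge>1. norm (v n) \<le> Mv" using assms(5) by blast
  obtain cu where cu: "cu > 0" "\<forall>n\<ge>1. cu \<le> norm (u n)" using assms(6) by blast
  obtain cv where cv: "cv > 0" "\<forall>n\<ge>1. cv \<le> norm (v n)" using assms(7) by blast
  have puu: "pu u n > 0" for n by (rule pu_pos[OF unz])
  have puv: "pu v n > 0" for n by (rule pu_pos[OF vnz])
  show ?thesis unfolding orthogonal_ops_def
  proof (intro allI impI, elim conjE)
    fix m1 m2 assume inv1: "invariant_prob p (wshift u) m1" and inv2: "invariant_prob p (wshift v) m2"
      and z1: "emeasure m1 {\<lambda>n. 0} = 0" and z2: "emeasure m2 {\<lambda>n. 0} = 0"
    have sets1: "sets m1 = sets (lp_borel p)" and sp1: "space m1 = lp p"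
      using inv1 by (auto simp: invariant_prob_def)
    have sets2: "sets m2 = sets (lp_borel p)" and sp2: "space m2 = lp p"
      using inv2 by (auto simp: invariant_prob_def)
    consider (A) "\<forall>\<delta>>0. \<exists>n. pu v n \<le> \<delta> * pu u n" | (B) "\<forall>\<delta>>0. \<exists>n. pu u n \<le> \<delta> * pu v n"
      | (C) "\<not> (\<forall>\<delta>>0. \<exists>n. pu v n \<le> \<delta> * pu u n)" "\<not> (\<forall>\<delta>>0. \<exists>n. pu u n \<le> \<delta> * pu v n)"
      by blast
    thus "mutually_singular m1 m2"
    proof cases
      case A
      obtain E where E: "E \<in> sets (lp_borel p)" "emeasure m1 (lp p - E) = 0" "emeasure m2 E = 0"
        using main_sing[OF p unz vnz Mu Mv cu inv1 inv2 z2 A] by blast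
      have "space (lp_borel p) - E \<in> sets (lp_borel p)" using E(1) by (rule sets.compl_sets)
      hence c: "lp p - E \<in> sets m1" using sets1 by (simp add: space_lp_borel)
      have "E \<subseteq> lp p" using E(1) sets.sets_into_space space_lp_borel by blast
      hence "space m2 - (lp p - E) = E" using sp2 by blast
      thus ?thesis unfolding mutually_singular_def using c E by auto
    next
      case B
      obtain E where E: "E \<in> sets (lp_borel p)" "emeasure m2 (lp p - E) = 0" "emeasure m1 E = 0"
        using main_sing[OF p vnz unz Mv Mu cv inv2 inv1 z1 B] by blast
      have c: "E \<in> sets m1" using E(1) sets1 by simp
      have "space m2 - E = lp p - E" using sp2 by simp
      thus ?thesis unfolding mutually_singular_def using c E by auto
    next
      case C
      obtain d1 where d1: "d1 > 0" "\<forall>n. d1 * pu u n < pu v n" using C(1) by (auto simp: not_le)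
      obtain d2 where d2: "d2 > 0" "\<forall>n. d2 * pu v n < pu u n" using C(2) by (auto simp: not_le)
      define d where "d n = (\<Prod>i\<in>{1..n}. v i / u i)" for n
      have nd: "norm (d n) = pu v n / pu u n" for n
        by (simp add: d_def pu_def prod_norm[symmetric] norm_divide prod_dividef)
      have dnz: "\<forall>n. d n \<noteq> 0"
      proof
        fix n have "norm (d n) > 0" using puu[of n] puv[of n] by (simp add: nd)
        thus "d n \<noteq> 0" by auto
      qed
      define C where "C = max (1/d1) (1/d2)"
      have bd1: "\<forall>n. norm (d n) \<le> C"
      proof
        fix n
        have "pu v n / pu u n \<le> 1/d2" using d2 puu[of n] puv[of n]
          by (simp add: divide_le_eq field_simps less_imp_le mult.commute)
        thus "norm (d n) \<le> C" by (simp add: nd C_def)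
      qed
      have bd2: "\<forall>n. norm (inverse (d n)) \<le> C"
      proof
        fix n
        have "pu u n / pu v n \<le> 1/d1" using d1 puu[of n] puv[of n]
          by (simp add: divide_le_eq field_simps less_imp_le mult.commute)
        thus "norm (inverse (d n)) \<le> C" by (simp add: nd C_def norm_inverse)
      qed
      have rec: "\<forall>n. d (Suc n) * u (Suc n) = d n * v (Suc n)"
      proof
        fix n
        have "d (Suc n) = d n * (v (Suc n) / u (Suc n))"
          by (simp add: d_def atLeastAtMostSuc_conv mult.commute)
        thus "d (Suc n) * u (Suc n) = d n * v (Suc n)" using unz[rule_format, of "Suc n"] by simp
      qed
      have "similar_ops p (wshift u) (wshift v)" by (rule similar_diag[OF p dnz bd1 bd2 rec])
      thus ?thesis using assms(8) by blast
    qed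
  qed
qed

end
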